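(* Let $K$ be a (not necessarily associative) ring with identity and $L$ a commutative associative ring with identity, and let $q\colon K\to L$ be a multiplicative quadratic map with $f(a,b)=q(a+b)-q(a)-q(b)$. Let $F$ be a subring of $L$ such that $K$ is an $F$-algebra, $q$ is $F$-quadratic, and every finitely generated $F$-submodule of $K$ is a free $F$-module. Let $\tilde K=L\otimes_F K$ (an $L$-algebra with $(\lambda\otimes a)(\mu\otimes b)=\lambda\mu\otimes ab$), write $\lambda a$ for $\lambda\otimes a$, and define $\tilde q\colon\tilde K\to L$ by $$\tilde q\Big(\sum_{i=1}^n\lambda_i a_i\Big)=\sum_{i=1}^n\lambda_i^2q(a_i)+\sum_{1\le i<j\le n}\lambda_i\lambda_j f(a_i,a_j)$$ for $a_i\in K$, $\lambda_i\in L$. Then $\tilde q$ is well defined and is a multiplicative $L$-quadratic map.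
   Context: A map $q\colon K\to L$ between rings with identity is called a multiplicative quadratic map if (i) $q(ab)=q(a)q(b)$ for all $a,b\in K$; (ii) $q(n\cdot 1_K)=n^2\cdot 1_L$ for all $n\in\mathbb{Z}$; (iii) the map $f\colon K\times K\to L$, $f(a,b)=q(a+b)-q(a)-q(b)$, is biadditive. If $F$ is a commutative associative ring such that $K$ and $L$ are $F$-algebras, $q$ is called $F$-quadratic if $f$ is $F$-bilinear and $q(\lambda a)=\lambda^2q(a)$ for all $a\in K$, $\lambda\in F$. *)

theory Defs
  imports Main
begin

class nonassoc_ring_1 = ab_group_add + times + one +
  assumes na_distrib_left: "a * (b + c) = a * b + a * c"
    and na_distrib_right: "(a + b) * c = a * c + b * c"
    and na_mult_1_left: "1 * a = a"
    and na_mult_1_right: "a * 1 = a"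

definition int_mult :: "int \<Rightarrow> 'a::ab_group_add \<Rightarrow> 'a" where
  "int_mult n x = (if n \<ge> 0 then (\<Sum>i<nat n. x) else - (\<Sum>i<nat (- n). x))"

definition qf :: "('k::ab_group_add \<Rightarrow> 'l::ab_group_add) \<Rightarrow> 'k \<Rightarrow> 'k \<Rightarrow> 'l" where
  "qf q a b = q (a + b) - q a - q b"

definition mult_quadratic :: "('k::nonassoc_ring_1 \<Rightarrow> 'l::comm_ring_1) \<Rightarrow> bool" where
  "mult_quadratic q \<longleftrightarrow>
     (\<forall>a b. q (a * b) = q a * q b) \<and>
     (\<forall>n::int. q (int_mult n 1) = of_int (n ^ 2)) \<and>
     (\<forall>a a' b. qf q (a + a') b = qf q a b + qf q a' b) \<and>
     (\<forall>a b b'. qf q a (b + b') = qf q a b + qf q a b')"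

definition is_subring :: "'l::comm_ring_1 set \<Rightarrow> bool" where
  "is_subring F \<longleftrightarrow> 1 \<in> F \<and> (\<forall>a\<in>F. \<forall>b\<in>F. a + b \<in> F \<and> a * b \<in> F) \<and> (\<forall>a\<in>F. - a \<in> F)"

definition F_algebra :: "'l::comm_ring_1 set \<Rightarrow> ('l \<Rightarrow> 'k::nonassoc_ring_1 \<Rightarrow> 'k) \<Rightarrow> bool" where
  "F_algebra F sm \<longleftrightarrow>
     (\<forall>c\<in>F. \<forall>a b. sm c (a + b) = sm c a + sm c b) \<and>
     (\<forall>c\<in>F. \<forall>d\<in>F. \<forall>a. sm (c + d) a = sm c a + sm d a) \<and>
     (\<forall>c\<in>F. \<forall>d\<in>F. \<forall>a. sm (c * d) a = sm c (sm d a)) \<and>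
     (\<forall>a. sm 1 a = a) \<and>
     (\<forall>c\<in>F. \<forall>a b. sm c (a * b) = sm c a * b \<and> sm c (a * b) = a * sm c b)"

definition F_quadratic :: "'l::comm_ring_1 set \<Rightarrow> ('l \<Rightarrow> 'k::nonassoc_ring_1 \<Rightarrow> 'k) \<Rightarrow> ('k \<Rightarrow> 'l) \<Rightarrow> bool" where
  "F_quadratic F sm q \<longleftrightarrow>
     (\<forall>c\<in>F. \<forall>a b. qf q (sm c a) b = c * qf q a b \<and> qf q a (sm c b) = c * qf q a b) \<and>
     (\<forall>a a' b. qf q (a + a') b = qf q a b + qf q a' b) \<and>
     (\<forall>a b b'. qf q a (b + b') = qf q a b + qf q a b') \<and>
     (\<forall>c\<in>F. \<forall>a. q (sm c a) = c ^ 2 * q a)"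

definition F_span :: "'l::comm_ring_1 set \<Rightarrow> ('l \<Rightarrow> 'k::nonassoc_ring_1 \<Rightarrow> 'k) \<Rightarrow> 'k set \<Rightarrow> 'k set" where
  "F_span F sm S = {(\<Sum>s\<in>T. sm (c s) s) | T c. finite T \<and> T \<subseteq> S \<and> (\<forall>s\<in>T. c s \<in> F)}"

definition F_lin_indep :: "'l::comm_ring_1 set \<Rightarrow> ('l \<Rightarrow> 'k::nonassoc_ring_1 \<Rightarrow> 'k) \<Rightarrow> 'k set \<Rightarrow> bool" where
  "F_lin_indep F sm B \<longleftrightarrow>
     (\<forall>T c. finite T \<and> T \<subseteq> B \<and> (\<forall>s\<in>T. c s \<in> F) \<and> (\<Sum>s\<in>T. sm (c s) s) = 0
        \<longrightarrow> (\<forall>s\<in>T. c s = 0))"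

definition F_free :: "'l::comm_ring_1 set \<Rightarrow> ('l \<Rightarrow> 'k::nonassoc_ring_1 \<Rightarrow> 'k) \<Rightarrow> 'k set \<Rightarrow> bool" where
  "F_free F sm M \<longleftrightarrow> (\<exists>B. B \<subseteq> M \<and> F_lin_indep F sm B \<and> F_span F sm B = M)"

definition fg_submodules_free :: "'l::comm_ring_1 set \<Rightarrow> ('l \<Rightarrow> 'k::nonassoc_ring_1 \<Rightarrow> 'k) \<Rightarrow> bool" where
  "fg_submodules_free F sm \<longleftrightarrow> (\<forall>S. finite S \<longrightarrow> F_free F sm (F_span F sm S))"

text \<open>Tensor product L \<otimes>_F K: elements are represented by lists [(\<lambda>_1,a_1),...,(\<lambda>_n,a_n)]
  standing for \<Sum> \<lambda>_i \<otimes> a_i.  Two lists represent the same element iff the difference of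
  their formal sums (in the free abelian group on L \<times> K) lies in the subgroup generated by
  the F-balanced biadditivity relations.\<close>
definition gen :: "'a \<Rightarrow> 'a \<Rightarrow> int" where
  "gen p = (\<lambda>x. if x = p then 1 else 0)"

inductive_set tensor_rel :: "'l::comm_ring_1 set \<Rightarrow> ('l \<Rightarrow> 'k::nonassoc_ring_1 \<Rightarrow> 'k) \<Rightarrow> ('l \<times> 'k \<Rightarrow> int) set"
  for F sm where
  zero: "(\<lambda>x. 0) \<in> tensor_rel F sm"
| add: "u \<in> tensor_rel F sm \<Longrightarrow> v \<in> tensor_rel F sm \<Longrightarrow> (\<lambda>x. u x + v x) \<in> tensor_rel F sm"
| neg: "u \<in> tensor_rel F sm \<Longrightarrow> (\<lambda>x. - u x) \<in> tensor_rel F sm"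
| add_left: "(\<lambda>x. gen (l + l', a) x - gen (l, a) x - gen (l', a) x) \<in> tensor_rel F sm"
| add_right: "(\<lambda>x. gen (l, a + b) x - gen (l, a) x - gen (l, b) x) \<in> tensor_rel F sm"
| balanced: "c \<in> F \<Longrightarrow> (\<lambda>x. gen (l * c, a) x - gen (l, sm c a) x) \<in> tensor_rel F sm"

definition formal_sum :: "('l \<times> 'k) list \<Rightarrow> ('l \<times> 'k \<Rightarrow> int)" where
  "formal_sum xs = (\<lambda>x. (\<Sum>p\<leftarrow>xs. gen p x))"

definition tensor_eq :: "'l::comm_ring_1 set \<Rightarrow> ('l \<Rightarrow> 'k::nonassoc_ring_1 \<Rightarrow> 'k) \<Rightarrow>
    ('l \<times> 'k) list \<Rightarrow> ('l \<times> 'k) list \<Rightarrow> bool" where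
  "tensor_eq F sm xs ys \<longleftrightarrow> (\<lambda>x. formal_sum xs x - formal_sum ys x) \<in> tensor_rel F sm"

text \<open>Operations on representatives: addition is concatenation, L-scaling, product.\<close>
definition tscale :: "'l::comm_ring_1 \<Rightarrow> ('l \<times> 'k) list \<Rightarrow> ('l \<times> 'k) list" where
  "tscale c xs = map (\<lambda>(l, a). (c * l, a)) xs"

definition tmul :: "('l::comm_ring_1 \<times> 'k::nonassoc_ring_1) list \<Rightarrow> ('l \<times> 'k) list \<Rightarrow> ('l \<times> 'k) list" where
  "tmul xs ys = concat (map (\<lambda>(l, a). map (\<lambda>(m, b). (l * m, a * b)) ys) xs)"

definition tq :: "('k::nonassoc_ring_1 \<Rightarrow> 'l::comm_ring_1) \<Rightarrow> ('l \<times> 'k) list \<Rightarrow> 'l" where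
  "tq q xs =
     (\<Sum>i<length xs. (fst (xs ! i)) ^ 2 * q (snd (xs ! i))) +
     (\<Sum>i<length xs. \<Sum>j<length xs. if i < j
        then fst (xs ! i) * fst (xs ! j) * qf q (snd (xs ! i)) (snd (xs ! j)) else 0)"

definition tf :: "('k::nonassoc_ring_1 \<Rightarrow> 'l::comm_ring_1) \<Rightarrow> ('l \<times> 'k) list \<Rightarrow> ('l \<times> 'k) list \<Rightarrow> 'l" where
  "tf q xs ys = tq q (xs @ ys) - tq q xs - tq q ys"

end

theory Submission
  imports Defs "HOL-Library.Multiset"
begin


definition Bq :: "('k::nonassoc_ring_1 \<Rightarrow> 'l::comm_ring_1) \<Rightarrow> ('l \<times> 'k) list \<Rightarrow> ('l \<times> 'k) list \<Rightarrow> 'l" where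
  "Bq q xs ys = (\<Sum>p\<leftarrow>xs. \<Sum>p'\<leftarrow>ys. fst p * fst p' * qf q (snd p) (snd p'))"

lemma sum_list_nth: "(\<Sum>p\<leftarrow>xs. g p) = (\<Sum>j<length xs. g (xs ! j))"
  by (simp add: sum_list_sum_nth atLeast0LessThan)

lemma tq_Nil: "tq q [] = 0" by (simp add: tq_def)

lemma tq_Cons: "tq q (x#xs) = fst x ^ 2 * q (snd x) + (\<Sum>p\<leftarrow>xs. fst x * fst p * qf q (snd x) (snd p)) + tq q xs"
proof -
  let ?h = "\<lambda>ys i j. if i < j then fst (ys ! i) * fst (ys ! j) * qf q (snd (ys ! i)) (snd (ys ! j)) else 0"
  have 1: "(\<Sum>i<length (x#xs). fst ((x#xs) ! i) ^ 2 * q (snd ((x#xs) ! i)))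
      = fst x ^ 2 * q (snd x) + (\<Sum>i<length xs. fst (xs ! i) ^ 2 * q (snd (xs ! i)))"
    by (simp add: sum.lessThan_Suc_shift del: sum.lessThan_Suc)
  have 2: "(\<Sum>i<length (x#xs). \<Sum>j<length (x#xs). ?h (x#xs) i j)
     = (\<Sum>p\<leftarrow>xs. fst x * fst p * qf q (snd x) (snd p)) + (\<Sum>i<length xs. \<Sum>j<length xs. ?h xs i j)"
    by (simp add: sum.lessThan_Suc_shift sum_list_nth nth_Cons_Suc del: sum.lessThan_Suc cong: if_cong)
  show ?thesis using 1 2 unfolding tq_def by (simp add: algebra_simps)
qed


lemma tq_append: "tq q (xs @ ys) = tq q xs + tq q ys + Bq q xs ys"
  by (induction xs) (simp_all add: tq_Nil tq_Cons Bq_def sum_list_addf sum_list_const_mult algebra_simps)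

lemma Bq_Nil1[simp]: "Bq q [] ys = 0" by (simp add: Bq_def)
lemma Bq_Nil2[simp]: "Bq q xs [] = 0" by (simp add: Bq_def)
lemma Bq_append1: "Bq q (xs @ xs') ys = Bq q xs ys + Bq q xs' ys" by (simp add: Bq_def)
lemma Bq_append2: "Bq q xs (ys @ ys') = Bq q xs ys + Bq q xs ys'" by (simp add: Bq_def sum_list_addf)
lemma Bq_Cons1: "Bq q (x#xs) ys = Bq q [x] ys + Bq q xs ys" by (simp add: Bq_def)
lemma Bq_Cons2: "Bq q xs (y#ys) = Bq q xs [y] + Bq q xs ys" by (simp add: Bq_def sum_list_addf)

lemma qf_sym: "qf q a b = qf q b a" by (simp add: qf_def add.commute)

lemma Bq_single: "Bq q [x] ys = Bq q ys [x]"
  by (induction ys) (auto simp: Bq_def qf_sym mult.commute mult.left_commute)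

lemma Bq_sym: "Bq q xs ys = Bq q ys xs"
proof (induction xs)
  case Nil then show ?case by simp
next
  case (Cons x xs)
  then show ?case using Bq_Cons1[of q x xs ys] Bq_Cons2[of q ys x xs] Bq_single[of q x ys] by simp
qed

lemma tq_single: "tq q [x] = fst x ^ 2 * q (snd x)" by (simp add: tq_Cons tq_Nil)

lemma Bq_mset2: "mset ys = mset ys' \<Longrightarrow> Bq q xs ys = Bq q xs ys'"
proof (induction ys arbitrary: ys')
  case Nil then show ?case by (cases ys') (auto simp: Bq_def)
next
  case (Cons y ys)
  have "y \<in> set ys'" using Cons.prems by (metis list.set_intros(1) set_mset_mset)
  then obtain B1 B2 where B: "ys' = B1 @ y # B2" by (meson split_list)
  have "mset ys = mset (B1 @ B2)" using Cons.prems B by simp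
  then have "Bq q xs ys = Bq q xs (B1 @ B2)" using Cons.IH by blast
  then show ?case using B Bq_Cons2[of q xs y ys] Bq_append2[of q xs B1 "y#B2"] Bq_Cons2[of q xs y B2]
      Bq_append2[of q xs B1 B2] by (simp add: algebra_simps)
qed

lemma tq_mset: "mset xs = mset ys \<Longrightarrow> tq q xs = tq q ys"
proof (induction xs arbitrary: ys)
  case Nil then show ?case by (cases ys) (auto simp: tq_Nil)
next
  case (Cons y xs ys')
  have "y \<in> set ys'" using Cons.prems by (metis list.set_intros(1) set_mset_mset)
  then obtain B1 B2 where B: "ys' = B1 @ y # B2" by (meson split_list)
  have m: "mset xs = mset (B1 @ B2)" using Cons.prems B by simp
  then have 1: "tq q xs = tq q (B1 @ B2)" using Cons.IH by blast
  have 2: "Bq q [y] xs = Bq q [y] (B1 @ B2)" using Bq_mset2[OF m] .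
  have "tq q (y # xs) = tq q [y] + tq q xs + Bq q [y] xs" using tq_append[of q "[y]" xs] by simp
  moreover have "tq q (B1 @ y # B2) = tq q B1 + (tq q [y] + tq q B2 + Bq q [y] B2) + Bq q B1 [y] + Bq q B1 B2"
    using tq_append[of q B1 "y#B2"] tq_append[of q "[y]" B2] Bq_append2[of q B1 "[y]" B2] by simp
  moreover have "tq q (B1 @ B2) = tq q B1 + tq q B2 + Bq q B1 B2" by (rule tq_append)
  moreover have "Bq q [y] (B1 @ B2) = Bq q [y] B1 + Bq q [y] B2" by (rule Bq_append2)
  ultimately show ?case using B 1 2 Bq_sym[of q B1 "[y]"] by (simp add: algebra_simps)
qed


lemma mq_mult: "mult_quadratic q \<Longrightarrow> q (a * b) = q a * q b" by (simp add: mult_quadratic_def)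
lemma mq_l: "mult_quadratic q \<Longrightarrow> qf q (a + a') b = qf q a b + qf q a' b" by (simp add: mult_quadratic_def)
lemma mq_r: "mult_quadratic q \<Longrightarrow> qf q a (b + b') = qf q a b + qf q a b'" by (simp add: mult_quadratic_def)
lemma q_add: "q (a + b) = q a + q b + qf q a b" by (simp add: qf_def)

lemma q_one: "mult_quadratic q \<Longrightarrow> q 1 = 1"
proof -
  assume "mult_quadratic q"
  then have "q (int_mult 1 1) = of_int (1 ^ 2)" unfolding mult_quadratic_def by blast
  then show ?thesis by (simp add: int_mult_def)
qed

lemma q_two: "mult_quadratic q \<Longrightarrow> q (1 + 1) = 4"
proof -
  assume "mult_quadratic q"
  then have "q (int_mult 2 1) = of_int (2 ^ 2)" unfolding mult_quadratic_def by blast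
  moreover have "int_mult 2 (1::'a) = 1 + 1" by (simp add: int_mult_def numeral_2_eq_2)
  ultimately show ?thesis by simp
qed

lemma qf_self: "mult_quadratic q \<Longrightarrow> qf q a a = 2 * q a"
proof -
  assume m: "mult_quadratic q"
  have "a + a = (1 + 1) * a" by (simp add: na_distrib_right na_mult_1_left)
  then have "q (a + a) = 4 * q a" using mq_mult[OF m, of "1+1" a] q_two[OF m] by simp
  then show ?thesis by (simp add: qf_def)
qed

lemma f_lm: "mult_quadratic q \<Longrightarrow> qf q (a * b) (a * b') = q a * qf q b b'"
proof -
  assume m: "mult_quadratic q"
  have "q (a*b + a*b') = q (a * (b + b'))" by (simp add: na_distrib_left)
  then show ?thesis using mq_mult[OF m] by (simp add: qf_def algebra_simps)
qed

lemma f_rm: "mult_quadratic q \<Longrightarrow> qf q (a * b) (a' * b) = qf q a a' * q b"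
proof -
  assume m: "mult_quadratic q"
  have "q (a*b + a'*b) = q ((a + a') * b)" by (simp add: na_distrib_right)
  then show ?thesis using mq_mult[OF m] by (simp add: qf_def algebra_simps)
qed

lemma f_ident: "mult_quadratic q \<Longrightarrow>
  qf q (a * b) (a' * b') + qf q (a * b') (a' * b) = qf q a a' * qf q b b'"
proof -
  assume m: "mult_quadratic q"
  have e: "(a + a') * (b + b') = (a*b + a*b') + (a'*b + a'*b')"
    by (simp add: na_distrib_left na_distrib_right add.assoc)
  have "q ((a + a') * (b + b')) = q (a + a') * q (b + b')" using mq_mult[OF m] .
  also have "\<dots> = (q a + q a' + qf q a a') * (q b + q b' + qf q b b')" by (simp add: q_add)
  finally have 1: "q ((a*b + a*b') + (a'*b + a'*b')) = (q a + q a' + qf q a a') * (q b + q b' + qf q b b')"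
    using e by simp
  have 2: "q ((a*b + a*b') + (a'*b + a'*b')) = q (a*b) + q (a*b') + qf q (a*b) (a*b')
       + (q (a'*b) + q (a'*b') + qf q (a'*b) (a'*b'))
       + (qf q (a*b) (a'*b) + qf q (a*b) (a'*b') + qf q (a*b') (a'*b) + qf q (a*b') (a'*b'))"
    unfolding q_add[of q "a*b + a*b'" "a'*b + a'*b'"] q_add[of q "a*b" "a*b'"] q_add[of q "a'*b" "a'*b'"]
      mq_l[OF m, of "a*b" "a*b'"] mq_r[OF m, of "a*b" "a'*b" "a'*b'"] mq_r[OF m, of "a*b'" "a'*b" "a'*b'"]
    by (simp add: add.assoc)
  have 3: "q (a*b) = q a * q b" "q (a*b') = q a * q b'" "q (a'*b) = q a' * q b" "q (a'*b') = q a' * q b'"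
    using mq_mult[OF m] by auto
  have 4: "qf q (a*b) (a*b') = q a * qf q b b'" "qf q (a'*b) (a'*b') = q a' * qf q b b'"
    "qf q (a*b) (a'*b) = qf q a a' * q b" "qf q (a*b') (a'*b') = qf q a a' * q b'"
    using f_lm[OF m] f_rm[OF m] by auto
  show ?thesis using 1 unfolding 2 3 4 by (simp add: algebra_simps)
qed


definition sx :: "'l::comm_ring_1 \<Rightarrow> 'k::nonassoc_ring_1 \<Rightarrow> ('l \<times> 'k) list \<Rightarrow> ('l \<times> 'k) list" where
  "sx l a ys = map (\<lambda>(m, b). (l * m, a * b)) ys"

lemma tmul_Nil: "tmul [] ys = []" by (simp add: tmul_def)
lemma tmul_Cons: "tmul ((l, a) # xs) ys = sx l a ys @ tmul xs ys" by (simp add: tmul_def sx_def)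
lemma sx_Cons: "sx l a ((m, b) # ys) = (l * m, a * b) # sx l a ys" by (simp add: sx_def)
lemma sx_Nil: "sx l a [] = []" by (simp add: sx_def)

lemma tq_sx: assumes m: "mult_quadratic q" shows "tq q (sx l a ys) = l ^ 2 * q a * tq q ys"
proof (induction ys)
  case Nil then show ?case by (simp add: sx_Nil tq_Nil)
next
  case (Cons y ys)
  obtain mm b where y: "y = (mm, b)" by fastforce
  have s: "(\<Sum>p\<leftarrow>sx l a ys. l * mm * fst p * qf q (a * b) (snd p))
      = l^2 * q a * (\<Sum>p\<leftarrow>ys. mm * fst p * qf q b (snd p))"
    by (induction ys) (auto simp: sx_Nil sx_Cons f_lm[OF m] algebra_simps power2_eq_square)
  show ?case unfolding y sx_Cons tq_Cons using Cons.IH s mq_mult[OF m, of a b]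
    by (simp add: algebra_simps power2_eq_square)
qed

lemma Bq_sx: assumes m: "mult_quadratic q"
  shows "Bq q (sx l a ys) (sx l' a' ys) = l * l' * qf q a a' * tq q ys"
proof (induction ys)
  case Nil then show ?case by (simp add: sx_Nil tq_Nil)
next
  case (Cons y ys)
  obtain mm b where y: "y = (mm, b)" by fastforce
  have s: "Bq q [(l * mm, a * b)] (sx l' a' ys) + Bq q (sx l a ys) [(l' * mm, a' * b)]
      = l * l' * qf q a a' * (\<Sum>p\<leftarrow>ys. mm * fst p * qf q b (snd p))"
  proof (induction ys)
    case Nil then show ?case by (simp add: sx_Nil)
  next
    case (Cons z zs)
    obtain n c where z: "z = (n, c)" by fastforce
    have "qf q (a * b) (a' * c) + qf q (a * c) (a' * b) = qf q a a' * qf q b c" by (rule f_ident[OF m])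
    have e0: "l * mm * (l' * n) * qf q (a * b) (a' * c) + l * n * (l' * mm) * qf q (a * c) (a' * b)
       = (l * l' * mm * n) * (qf q (a * b) (a' * c) + qf q (a * c) (a' * b))"
      by (simp add: algebra_simps)
    have e: "l * mm * (l' * n) * qf q (a * b) (a' * c) + l * n * (l' * mm) * qf q (a * c) (a' * b)
       = l * l' * qf q a a' * (mm * n * qf q b c)"
      unfolding e0 \<open>qf q (a * b) (a' * c) + qf q (a * c) (a' * b) = qf q a a' * qf q b c\<close>
      by (simp add: algebra_simps)
    have b1: "\<And>x1 y1 x2 y2. Bq q [(x1,y1)] [(x2,y2)] = x1 * x2 * qf q y1 y2" by (simp add: Bq_def)
    have "Bq q [(l * mm, a * b)] (sx l' a' (z # zs)) + Bq q (sx l a (z # zs)) [(l' * mm, a' * b)]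
       = (Bq q [(l * mm, a * b)] [(l' * n, a' * c)] + Bq q [(l * n, a * c)] [(l' * mm, a' * b)])
         + (Bq q [(l * mm, a * b)] (sx l' a' zs) + Bq q (sx l a zs) [(l' * mm, a' * b)])"
      unfolding z sx_Cons Bq_Cons2[of q "[(l * mm, a * b)]" "(l' * n, a' * c)" "sx l' a' zs"]
        Bq_Cons1[of q "(l * n, a * c)" "sx l a zs" "[(l' * mm, a' * b)]"]
      by (simp add: ac_simps)
    also have "\<dots> = l * l' * qf q a a' * (mm * n * qf q b c) + l * l' * qf q a a' * (\<Sum>p\<leftarrow>zs. mm * fst p * qf q b (snd p))"
      unfolding b1 e Cons.IH ..
    also have "\<dots> = l * l' * qf q a a' * (\<Sum>p\<leftarrow>z # zs. mm * fst p * qf q b (snd p))"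
      unfolding z by (simp add: distrib_left)
    finally show ?case .
  qed
  have "Bq q (sx l a (y # ys)) (sx l' a' (y # ys)) =
     Bq q [(l * mm, a * b)] [(l' * mm, a' * b)] + (Bq q [(l * mm, a * b)] (sx l' a' ys) + Bq q (sx l a ys) [(l' * mm, a' * b)])
     + Bq q (sx l a ys) (sx l' a' ys)"
    unfolding y sx_Cons Bq_Cons1[of q "(l * mm, a * b)" "sx l a ys"]
      Bq_Cons2[of q "[(l * mm, a * b)]" "(l' * mm, a' * b)" "sx l' a' ys"]
      Bq_Cons2[of q "sx l a ys" "(l' * mm, a' * b)" "sx l' a' ys"]
    by (simp add: ac_simps)
  also have "\<dots> = l * l' * qf q a a' * tq q (y # ys)"
    unfolding s Cons.IH y tq_Cons by (simp add: Bq_def f_rm[OF m] algebra_simps power2_eq_square)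
  finally show ?case .
qed

lemma Bq_sx_tmul: assumes m: "mult_quadratic q"
  shows "Bq q (sx l a ys) (tmul xs ys) = Bq q [(l, a)] xs * tq q ys"
proof (induction xs)
  case Nil then show ?case by (simp add: tmul_Nil)
next
  case (Cons x xs)
  obtain l' a' where x: "x = (l', a')" by fastforce
  show ?case unfolding x tmul_Cons Bq_append2 Cons.IH Bq_sx[OF m]
    using Bq_Cons2[of q "[(l,a)]" "(l',a')" xs] by (simp add: Bq_def algebra_simps)
qed

lemma tq_tmul: assumes m: "mult_quadratic q" shows "tq q (tmul xs ys) = tq q xs * tq q ys"
proof (induction xs)
  case Nil then show ?case by (simp add: tmul_Nil tq_Nil)
next
  case (Cons x xs)
  obtain l a where x: "x = (l, a)" by fastforce
  have "tq q (x # xs) = tq q [x] + tq q xs + Bq q [x] xs" using tq_append[of q "[x]" xs] by simp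
  then show ?case unfolding x tmul_Cons tq_append tq_sx[OF m] Cons.IH Bq_sx_tmul[OF m]
    by (simp add: tq_single x algebra_simps)
qed


lemma fs_append: "formal_sum (xs @ ys) x = formal_sum xs x + formal_sum ys x"
  by (simp add: formal_sum_def)
lemma fs_count: "formal_sum xs x = int (count (mset xs) x)"
  by (induction xs) (auto simp: formal_sum_def gen_def)

lemma rel_repr:
  assumes m: "mult_quadratic q" and fq: "F_quadratic F sm q" and r: "r \<in> tensor_rel F sm"
  shows "\<exists>P N. (\<forall>x. r x = formal_sum P x - formal_sum N x) \<and> tq q P = tq q N \<and> (\<forall>zs. Bq q zs P = Bq q zs N)"
  using r
proof induction
  case zero
  show ?case by (rule exI[of _ "[]"], rule exI[of _ "[]"]) (simp add: formal_sum_def)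
next
  case (add u v)
  then obtain P1 N1 P2 N2 where 1: "\<forall>x. u x = formal_sum P1 x - formal_sum N1 x" "tq q P1 = tq q N1" "\<forall>zs. Bq q zs P1 = Bq q zs N1"
    and 2: "\<forall>x. v x = formal_sum P2 x - formal_sum N2 x" "tq q P2 = tq q N2" "\<forall>zs. Bq q zs P2 = Bq q zs N2"
    by blast
  have "Bq q P1 P2 = Bq q P1 N2" using 2(3) by blast
  also have "\<dots> = Bq q N2 P1" by (rule Bq_sym)
  also have "\<dots> = Bq q N2 N1" using 1(3) by blast
  also have "\<dots> = Bq q N1 N2" by (rule Bq_sym)
  finally have "Bq q P1 P2 = Bq q N1 N2" .
  then have "tq q (P1 @ P2) = tq q (N1 @ N2)" using 1(2) 2(2) by (simp add: tq_append)
  moreover have "\<forall>zs. Bq q zs (P1 @ P2) = Bq q zs (N1 @ N2)" using 1(3) 2(3) by (simp add: Bq_append2)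
  moreover have "\<forall>x. u x + v x = formal_sum (P1 @ P2) x - formal_sum (N1 @ N2) x" using 1(1) 2(1) by (simp add: fs_append)
  ultimately show ?case by blast
next
  case (neg u)
  then obtain P N where "\<forall>x. u x = formal_sum P x - formal_sum N x" "tq q P = tq q N" "\<forall>zs. Bq q zs P = Bq q zs N"
    by blast
  then show ?case by (intro exI[of _ N] exI[of _ P]) auto
next
  case (add_left l l' a)
  have "tq q [(l + l', a)] = tq q [(l, a), (l', a)]"
    by (simp add: tq_Cons tq_Nil qf_self[OF m] power2_eq_square algebra_simps)
  moreover have "\<forall>zs. Bq q zs [(l + l', a)] = Bq q zs [(l, a), (l', a)]"
    by (simp add: Bq_def sum_list_addf algebra_simps)
  moreover have "\<forall>x. gen (l + l', a) x - gen (l, a) x - gen (l', a) x = formal_sum [(l + l', a)] x - formal_sum [(l, a), (l', a)] x"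
    by (simp add: formal_sum_def)
  ultimately show ?case by blast
next
  case (add_right l a b)
  have "tq q [(l, a + b)] = tq q [(l, a), (l, b)]"
    by (simp add: tq_Cons tq_Nil q_add[of q a b] power2_eq_square algebra_simps)
  moreover have "\<forall>zs. Bq q zs [(l, a + b)] = Bq q zs [(l, a), (l, b)]"
    by (simp add: Bq_def mq_r[OF m] sum_list_addf algebra_simps)
  moreover have "\<forall>x. gen (l, a + b) x - gen (l, a) x - gen (l, b) x = formal_sum [(l, a + b)] x - formal_sum [(l, a), (l, b)] x"
    by (simp add: formal_sum_def)
  ultimately show ?case by blast
next
  case (balanced c l a)
  have fr: "qf q b (sm c a) = c * qf q b a" for b using fq balanced unfolding F_quadratic_def by blast
  have fqq: "q (sm c a) = c ^ 2 * q a" using fq balanced unfolding F_quadratic_def by blast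
  have "tq q [(l * c, a)] = tq q [(l, sm c a)]"
    by (simp add: tq_Cons tq_Nil fqq power2_eq_square algebra_simps)
  moreover have "\<forall>zs. Bq q zs [(l * c, a)] = Bq q zs [(l, sm c a)]"
    by (simp add: Bq_def fr algebra_simps)
  moreover have "\<forall>x. gen (l * c, a) x - gen (l, sm c a) x = formal_sum [(l * c, a)] x - formal_sum [(l, sm c a)] x"
    by (simp add: formal_sum_def)
  ultimately show ?case by blast
qed

lemma tq_wd:
  assumes m: "mult_quadratic q" and fq: "F_quadratic F sm q" and te: "tensor_eq F sm xs ys"
  shows "tq q xs = tq q ys"
proof -
  obtain P N where PN: "\<forall>x. formal_sum xs x - formal_sum ys x = formal_sum P x - formal_sum N x"
    "tq q P = tq q N" "\<forall>zs. Bq q zs P = Bq q zs N"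
    using rel_repr[OF m fq te[unfolded tensor_eq_def]] by blast
  have "formal_sum (xs @ N) x = formal_sum (ys @ P) x" for x
  proof -
    have "formal_sum xs x - formal_sum ys x = formal_sum P x - formal_sum N x" using PN(1) by blast
    then show ?thesis unfolding fs_append by (simp add: algebra_simps)
  qed
  then have "int (count (mset (xs @ N)) x) = int (count (mset (ys @ P)) x)" for x
    unfolding fs_count by blast
  then have "count (mset (xs @ N)) x = count (mset (ys @ P)) x" for x
    using of_nat_eq_iff by blast
  then have ms: "mset (xs @ N) = mset (ys @ P)" by (rule multiset_eqI)
  have e1: "tq q (xs @ N) = tq q (ys @ P)" using tq_mset[OF ms] .
  have e2: "Bq q P (xs @ N) = Bq q P (ys @ P)" using Bq_mset2[OF ms] .
  have "Bq q P xs + Bq q P N = Bq q P ys + Bq q P P" using e2 unfolding Bq_append2 .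
  moreover have "Bq q P P = Bq q P N" using PN(3) by blast
  ultimately have "Bq q P xs = Bq q P ys" by simp
  then have "Bq q xs P = Bq q ys P" using Bq_sym[of q xs P] Bq_sym[of q ys P] by simp
  moreover have "Bq q xs P = Bq q xs N" using PN(3) by blast
  ultimately have "Bq q xs N = Bq q ys P" by simp
  then show ?thesis using e1 PN(2) unfolding tq_append by simp
qed

lemma tf_Bq: "tf q xs ys = Bq q xs ys" by (simp add: tf_def tq_append)

lemma tscale_Cons: "tscale c (x # xs) = (c * fst x, snd x) # tscale c xs" by (simp add: tscale_def split_def)
lemma tscale_Nil: "tscale c [] = []" by (simp add: tscale_def)

lemma Bq_tscale1: "Bq q (tscale c xs) ys = c * Bq q xs ys"
proof (induction xs)
  case Nil then show ?case by (simp add: tscale_Nil)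
next
  case (Cons x xs)
  have s: "(\<Sum>p'\<leftarrow>ys. c * fst x * fst p' * qf q (snd x) (snd p')) = c * (\<Sum>p'\<leftarrow>ys. fst x * fst p' * qf q (snd x) (snd p'))"
    by (induction ys) (simp_all add: distrib_left mult.assoc)
  have "Bq q (tscale c (x # xs)) ys = Bq q [(c * fst x, snd x)] ys + Bq q (tscale c xs) ys"
    unfolding tscale_Cons by (rule Bq_Cons1)
  also have "\<dots> = c * Bq q [x] ys + c * Bq q xs ys" unfolding Cons.IH by (simp add: Bq_def s)
  also have "\<dots> = c * Bq q (x # xs) ys" using Bq_Cons1[of q x xs ys] by (simp add: distrib_left)
  finally show ?case .
qed

lemma Bq_tscale2: "Bq q xs (tscale c ys) = c * Bq q xs ys"
  using Bq_tscale1[of q c ys xs] Bq_sym[of q xs "tscale c ys"] Bq_sym[of q ys xs] by simp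

lemma tq_tscale: "tq q (tscale c xs) = c ^ 2 * tq q xs"
proof (induction xs)
  case Nil then show ?case by (simp add: tscale_Nil tq_Nil)
next
  case (Cons x xs)
  have "tq q (tscale c (x # xs)) = tq q [(c * fst x, snd x)] + tq q (tscale c xs) + Bq q [(c * fst x, snd x)] (tscale c xs)"
    unfolding tscale_Cons using tq_append[of q "[(c * fst x, snd x)]" "tscale c xs"] by simp
  also have "\<dots> = c ^ 2 * tq q [x] + c ^ 2 * tq q xs + c ^ 2 * Bq q [x] xs"
    unfolding Cons.IH Bq_tscale2 Bq_tscale1[of q c "[x]" xs, unfolded tscale_Cons tscale_Nil]
    by (simp add: tq_single power2_eq_square mult.assoc mult.left_commute)
  also have "\<dots> = c ^ 2 * tq q (x # xs)" using tq_append[of q "[x]" xs] by (simp add: distrib_left)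
  finally show ?case .
qed


theorem proposition2p3:
  fixes F :: "'l::comm_ring_1 set"
    and sm :: "'l \<Rightarrow> 'k::nonassoc_ring_1 \<Rightarrow> 'k"
    and q :: "'k \<Rightarrow> 'l"
  assumes "mult_quadratic q"
    and "is_subring F"
    and "F_algebra F sm"
    and "F_quadratic F sm q"
    and "fg_submodules_free F sm"
  shows "(\<forall>xs ys. tensor_eq F sm xs ys \<longrightarrow> tq q xs = tq q ys)
    \<and> (\<forall>xs ys. tq q (tmul xs ys) = tq q xs * tq q ys)
    \<and> (\<forall>n::int. tq q [(of_int n, 1)] = of_int (n ^ 2))
    \<and> (\<forall>xs xs' ys. tf q (xs @ xs') ys = tf q xs ys + tf q xs' ys)
    \<and> (\<forall>xs ys ys'. tf q xs (ys @ ys') = tf q xs ys + tf q xs ys')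
    \<and> (\<forall>c xs ys. tf q (tscale c xs) ys = c * tf q xs ys \<and> tf q xs (tscale c ys) = c * tf q xs ys)
    \<and> (\<forall>c xs. tq q (tscale c xs) = c ^ 2 * tq q xs)"
proof (intro conjI allI impI)
  fix xs ys assume "tensor_eq F sm xs ys"
  then show "tq q xs = tq q ys" using tq_wd[OF assms(1) assms(4)] by blast
next
  fix xs ys show "tq q (tmul xs ys) = tq q xs * tq q ys" by (rule tq_tmul[OF assms(1)])
next
  fix n :: int show "tq q [(of_int n, 1)] = of_int (n ^ 2)"
    by (simp add: tq_single q_one[OF assms(1)])
next
  fix xs xs' ys show "tf q (xs @ xs') ys = tf q xs ys + tf q xs' ys" by (simp add: tf_Bq Bq_append1)
next
  fix xs ys ys' show "tf q xs (ys @ ys') = tf q xs ys + tf q xs ys'" by (simp add: tf_Bq Bq_append2)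
next
  fix c xs ys show "tf q (tscale c xs) ys = c * tf q xs ys" by (simp add: tf_Bq Bq_tscale1)
next
  fix c xs ys show "tf q xs (tscale c ys) = c * tf q xs ys" by (simp add: tf_Bq Bq_tscale2)
next
  fix c xs show "tq q (tscale c xs) = c ^ 2 * tq q xs" by (rule tq_tscale)
qed

end
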